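(* The dual space $\mathcal R^*$ of Read's space $\mathcal R=(c_0,|||\cdot|||)$ is smooth, i.e. its (dual) norm is Gâteaux differentiable at every nonzero element.
   Context: Let $c_{00}(\mathbb Q)$ be the set of finitely supported sequences with rational coefficients, and let $(u_n)_{n\in\mathbb N}$ be a sequence in $c_{00}(\mathbb Q)$ which lists every element of $c_{00}(\mathbb Q)$ infinitely many times. Let $(a_n)_{n\in\mathbb N}$ be a strictly increasing sequence of positive integers with $a_n>\max\operatorname{supp} u_n$ and $a_n>\|u_n\|_1$ for every $n$. $(e_n)$ denotes the canonical unit vectors and $\langle x,y\rangle=\sum_n x_ny_n$. Read's norm on $c_0$ is $|||x||| = \|x\|_\infty + \sum_{n} 2^{-a_n^2}|\langle x, u_n - e_{a_n}\rangle|$, and Read's space is $\mathcal R=(c_0,|||\cdot|||)$ (real scalars). *)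

theory Defs
  imports Complex_Main
begin

definition c0 :: "(nat \<Rightarrow> real) set" where
  "c0 = {x. x \<longlonglongrightarrow> 0}"

definition c00Q :: "(nat \<Rightarrow> real) set" where
  "c00Q = {v. finite {k. v k \<noteq> 0} \<and> (\<forall>k. v k \<in> \<rat>)}"

definition supnorm :: "(nat \<Rightarrow> real) \<Rightarrow> real" where
  "supnorm x = (SUP k. \<bar>x k\<bar>)"

definition l1norm :: "(nat \<Rightarrow> real) \<Rightarrow> real" where
  "l1norm v = (\<Sum>k\<in>{k. v k \<noteq> 0}. \<bar>v k\<bar>)"

definition pair :: "(nat \<Rightarrow> real) \<Rightarrow> (nat \<Rightarrow> real) \<Rightarrow> real" where
  "pair x y = (\<Sum>k\<in>{k. y k \<noteq> 0}. x k * y k)"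

definition unitvec :: "nat \<Rightarrow> nat \<Rightarrow> real" where
  "unitvec n = (\<lambda>k. if k = n then 1 else 0)"

definition read_admissible :: "(nat \<Rightarrow> nat \<Rightarrow> real) \<Rightarrow> (nat \<Rightarrow> nat) \<Rightarrow> bool" where
  "read_admissible u a \<longleftrightarrow>
     (\<forall>n. u n \<in> c00Q) \<and>
     (\<forall>v\<in>c00Q. infinite {n. u n = v}) \<and>
     strict_mono a \<and> (\<forall>n. 0 < a n) \<and>
     (\<forall>n k. u n k \<noteq> 0 \<longrightarrow> k < a n) \<and>
     (\<forall>n. l1norm (u n) < real (a n))"

definition read_norm :: "(nat \<Rightarrow> nat \<Rightarrow> real) \<Rightarrow> (nat \<Rightarrow> nat) \<Rightarrow> (nat \<Rightarrow> real) \<Rightarrow> real" where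
  "read_norm u a x = supnorm x +
     (\<Sum>n. inverse (2 ^ (a n ^ 2)) * \<bar>pair x (\<lambda>k. u n k - unitvec (a n) k)\<bar>)"

text \<open>The dual space of (c0, read_norm): linear functionals on c0 bounded w.r.t. read_norm,
  represented extensionally (value 0 outside c0).\<close>
definition read_dual :: "(nat \<Rightarrow> nat \<Rightarrow> real) \<Rightarrow> (nat \<Rightarrow> nat) \<Rightarrow> ((nat \<Rightarrow> real) \<Rightarrow> real) set" where
  "read_dual u a = {f.
     (\<forall>x\<in>c0. \<forall>y\<in>c0. f (\<lambda>k. x k + y k) = f x + f y) \<and>
     (\<forall>c. \<forall>x\<in>c0. f (\<lambda>k. c * x k) = c * f x) \<and>
     (\<exists>C. \<forall>x\<in>c0. \<bar>f x\<bar> \<le> C * read_norm u a x) \<and>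
     (\<forall>x. x \<notin> c0 \<longrightarrow> f x = 0)}"

definition dual_norm :: "(nat \<Rightarrow> nat \<Rightarrow> real) \<Rightarrow> (nat \<Rightarrow> nat) \<Rightarrow> ((nat \<Rightarrow> real) \<Rightarrow> real) \<Rightarrow> real" where
  "dual_norm u a f = (SUP x\<in>{x\<in>c0. read_norm u a x \<le> 1}. \<bar>f x\<bar>)"

definition gateaux_diff ::
  "('b \<Rightarrow> real) set \<Rightarrow> (('b \<Rightarrow> real) \<Rightarrow> real) \<Rightarrow> ('b \<Rightarrow> real) \<Rightarrow> bool" where
  "gateaux_diff D N f \<longleftrightarrow>
     (\<exists>L. (\<forall>g\<in>D. ((\<lambda>t. (N (\<lambda>x. f x + t * g x) - N f) / t) \<longlongrightarrow> L g) (at 0)) \<and>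
          (\<forall>g\<in>D. \<forall>h\<in>D. L (\<lambda>x. g x + h x) = L g + L h) \<and>
          (\<forall>c. \<forall>g\<in>D. L (\<lambda>x. c * g x) = c * L g) \<and>
          (\<exists>C. \<forall>g\<in>D. \<bar>L g\<bar> \<le> C * N g))"

end

theory Submission
  imports Defs "HOL-Analysis.Analysis"
begin

lemma pow_ineq: "(real m + 1) * 4^m \<le> 4 * 2^(m^2)"
proof -
  have "Suc m \<le> 2^m" using Suc_leI[OF less_exp[of m]] .
  hence "real (Suc m) \<le> real (2^m)" by (simp only: of_nat_le_iff)
  hence h1: "real m + 1 \<le> 2^m" by simp
  have h3: "3*m \<le> m^2 + 2"
  proof (cases "m \<ge> 3")
    case True
    hence "3*m \<le> m*m" by simp
    thus ?thesis unfolding power2_eq_square by linarith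
  next
    case False
    hence "m = 0 \<or> m = 1 \<or> m = 2" by auto
    thus ?thesis by auto
  qed
  have "(2::real)^(3*m) \<le> 2^(m^2+2)" by (rule power_increasing[OF h3]) simp
  moreover have "(2::real)^(3*m) = 2^m * 4^m"
  proof -
    have "(2::real)^(3*m) = 2^(m+m+m)" by (simp add: numeral_3_eq_3)
    also have "\<dots> = 2^m*2^m*2^m" by (simp only: power_add)
    also have "(4::real)^m = 2^m*2^m" by (metis mult_2 numeral_Bit0 power_mult_distrib)
    ultimately show ?thesis by simp
  qed
  moreover have "(2::real)^(m^2+2) = 4 * 2^(m^2)" by (simp add: power_add)
  ultimately have "2^m * 4^m \<le> 4 * (2::real)^(m^2)" by simp
  moreover have "(real m + 1) * 4^m \<le> 2^m * 4^m" using h1 by simp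
  ultimately show ?thesis by linarith
qed

definition wt :: "(nat \<Rightarrow> nat) \<Rightarrow> nat \<Rightarrow> real" where "wt a n = inverse (2 ^ (a n ^ 2))"
definition vv :: "(nat \<Rightarrow> nat \<Rightarrow> real) \<Rightarrow> (nat \<Rightarrow> nat) \<Rightarrow> nat \<Rightarrow> nat \<Rightarrow> real" where
  "vv u a n = (\<lambda>k. u n k - unitvec (a n) k)"

lemma read_norm_alt: "read_norm u a x = supnorm x + (\<Sum>n. wt a n * \<bar>pair x (vv u a n)\<bar>)"
  by (simp add: read_norm_def wt_def vv_def)

lemma pair_eq: "finite S \<Longrightarrow> {k. y k \<noteq> 0} \<subseteq> S \<Longrightarrow> pair x y = (\<Sum>k\<in>S. x k * y k)"
  unfolding pair_def by (rule sum.mono_neutral_left) auto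

lemma sup_le: "\<forall>k. \<bar>x k\<bar> \<le> B \<Longrightarrow> supnorm x \<le> B"
  unfolding supnorm_def by (rule cSUP_least) auto

lemma le_sup: "\<forall>k. \<bar>x k\<bar> \<le> B \<Longrightarrow> \<bar>x k\<bar> \<le> supnorm x"
  unfolding supnorm_def by (rule cSUP_upper) (auto intro: bdd_aboveI2)

lemma c0_bnd: "x \<in> c0 \<Longrightarrow> \<exists>B. \<forall>k. \<bar>x k\<bar> \<le> B"
proof -
  assume "x \<in> c0"
  hence "convergent x" unfolding c0_def convergent_def by blast
  hence "Bseq x" by (rule convergent_imp_Bseq)
  thus ?thesis unfolding Bseq_def by auto
qed

lemma fin_c0: "\<forall>k\<ge>m. x k = 0 \<Longrightarrow> x \<in> c0"
  unfolding c0_def mem_Collect_eq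
  by (rule tendsto_eventually) (unfold eventually_sequentially, blast)

locale RS =
  fixes u :: "nat \<Rightarrow> nat \<Rightarrow> real" and a :: "nat \<Rightarrow> nat"
  assumes adm: "read_admissible u a"
begin

abbreviation "P n x \<equiv> pair x (vv u a n)"
abbreviation "rn \<equiv> read_norm u a"
abbreviation "DD \<equiv> read_dual u a"
abbreviation "NN \<equiv> dual_norm u a"
definition "cc n = wt a n * (real (a n) + 1)"
definition "K0 = 1 + (\<Sum>n. cc n)"

lemma smono: "strict_mono a" using adm unfolding read_admissible_def by auto
lemma u_supp: "u n k \<noteq> 0 \<Longrightarrow> k < a n" using adm unfolding read_admissible_def by auto
lemma l1: "l1norm (u n) < real (a n)" using adm unfolding read_admissible_def by auto
lemma uc00: "u n \<in> c00Q" using adm unfolding read_admissible_def by auto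
lemma uinf: "v \<in> c00Q \<Longrightarrow> infinite {n. u n = v}" using adm unfolding read_admissible_def by auto
lemma a_ge: "n \<le> a n" using seq_suble[OF smono] .

lemma vv_supp: "{k. vv u a n k \<noteq> 0} \<subseteq> {..a n}"
  using u_supp by (force simp: vv_def unitvec_def)

lemma P_eq: "P n x = (\<Sum>k\<le>a n. x k * vv u a n k)"
  by (rule pair_eq[OF _ vv_supp]) simp

lemma vv_l1: "(\<Sum>k\<le>a n. \<bar>vv u a n k\<bar>) \<le> real (a n) + 1"
proof -
  have "(\<Sum>k\<le>a n. \<bar>vv u a n k\<bar>) \<le> (\<Sum>k\<le>a n. \<bar>u n k\<bar> + \<bar>unitvec (a n) k\<bar>)"
    by (rule sum_mono) (simp add: vv_def abs_triangle_ineq4)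
  also have "\<dots> = (\<Sum>k\<le>a n. \<bar>u n k\<bar>) + (\<Sum>k\<le>a n. \<bar>unitvec (a n) k\<bar>)"
    by (simp add: sum.distrib)
  also have "(\<Sum>k\<le>a n. \<bar>unitvec (a n) k\<bar>) = 1"
    by (simp add: unitvec_def if_distrib cong: if_cong)
  also have "(\<Sum>k\<le>a n. \<bar>u n k\<bar>) = l1norm (u n)"
    unfolding l1norm_def
    by (rule sum.mono_neutral_right) (auto dest: u_supp)
  finally show ?thesis using l1[of n] by linarith
qed

lemma P_bound: assumes "\<forall>k. \<bar>x k\<bar> \<le> B" shows "\<bar>P n x\<bar> \<le> B * (real (a n) + 1)"
proof -
  have B0: "0 \<le> B" using assms by (meson abs_ge_zero order_trans)
  have "\<bar>P n x\<bar> \<le> (\<Sum>k\<le>a n. \<bar>x k * vv u a n k\<bar>)" unfolding P_eq by (rule sum_abs)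
  also have "\<dots> \<le> (\<Sum>k\<le>a n. B * \<bar>vv u a n k\<bar>)"
    by (rule sum_mono) (simp add: abs_mult assms mult_right_mono)
  also have "\<dots> = B * (\<Sum>k\<le>a n. \<bar>vv u a n k\<bar>)" by (simp add: sum_distrib_left)
  also have "\<dots> \<le> B * (real (a n) + 1)" using vv_l1 B0 by (simp add: mult_left_mono)
  finally show ?thesis .
qed

lemma wt_pos: "0 < wt a n" by (simp add: wt_def)

lemma wt_bound: "cc n \<le> 4 * (1/2)^(a n) * (1/2)^(a n)"
proof -
  have "(real (a n) + 1) * 4^(a n) \<le> 4 * 2^(a n ^ 2)" by (rule pow_ineq)
  moreover have "(1/2::real)^(a n) * (1/2)^(a n) = 1 / 4^(a n)"
    by (simp add: power_divide power_mult_distrib[symmetric])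
  ultimately show ?thesis unfolding cc_def wt_def
    by (simp add: field_simps)
qed

lemma cc_bound: "cc n \<le> 4 * (1/2)^n"
proof -
  have "(1/2::real)^(a n) \<le> (1/2)^n" by (rule power_decreasing[OF a_ge]) auto
  moreover have "(1/2::real)^(a n) \<le> 1" by (simp add: power_le_one)
  ultimately have "(1/2::real)^(a n) * (1/2)^(a n) \<le> 1 * (1/2)^n"
    by (intro mult_mono) auto
  thus ?thesis using wt_bound[of n] by linarith
qed

lemma cc_nonneg: "0 \<le> cc n" unfolding cc_def using wt_pos[of n] by simp

lemma cc_summable: "summable cc"
proof (rule summable_comparison_test[where g = "\<lambda>n. 4 * (1/2::real)^n"])
  show "\<exists>N. \<forall>n\<ge>N. norm (cc n) \<le> 4 * (1 / 2) ^ n" using cc_bound cc_nonneg by auto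
  show "summable (\<lambda>n. 4 * (1/2::real)^n)" by (intro summable_mult summable_geometric) simp
qed

lemma S_bound: assumes "\<forall>k. \<bar>x k\<bar> \<le> B" shows "wt a n * \<bar>P n x\<bar> \<le> B * cc n"
proof -
  have "wt a n * \<bar>P n x\<bar> \<le> wt a n * (B * (real (a n) + 1))"
    by (rule mult_left_mono[OF P_bound[OF assms]]) (simp add: less_imp_le[OF wt_pos])
  thus ?thesis by (simp add: cc_def algebra_simps)
qed

lemma S_summable: assumes "\<forall>k. \<bar>x k\<bar> \<le> B" shows "summable (\<lambda>n. wt a n * \<bar>P n x\<bar>)"
proof (rule summable_comparison_test[where g = "\<lambda>n. B * cc n"])
  show "\<exists>N. \<forall>n\<ge>N. norm (wt a n * \<bar>P n x\<bar>) \<le> B * cc n" using S_bound[OF assms] wt_pos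
    by (simp add: abs_mult less_imp_le)
  show "summable (\<lambda>n. B * cc n)" by (intro summable_mult cc_summable)
qed

lemma S_nonneg: "0 \<le> wt a n * \<bar>P n x\<bar>" using wt_pos[of n] by simp

lemma rn_le: assumes "\<forall>k. \<bar>x k\<bar> \<le> B" shows "rn x \<le> B * K0"
proof -
  have "(\<Sum>n. wt a n * \<bar>P n x\<bar>) \<le> (\<Sum>n. B * cc n)"
    by (rule suminf_le[OF S_bound[OF assms] S_summable[OF assms]]) (intro summable_mult cc_summable)
  also have "\<dots> = B * (\<Sum>n. cc n)" by (rule suminf_mult[OF cc_summable])
  finally show ?thesis using sup_le[OF assms] unfolding read_norm_alt K0_def by (simp add: algebra_simps)
qed

lemma rn_ge_sup: assumes "\<forall>k. \<bar>x k\<bar> \<le> B" shows "supnorm x \<le> rn x"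
  unfolding read_norm_alt using suminf_nonneg[OF S_summable[OF assms] S_nonneg] by simp

lemma rn_ge_coord: assumes "\<forall>k. \<bar>x k\<bar> \<le> B" shows "\<bar>x k\<bar> \<le> rn x"
  using le_sup[OF assms] rn_ge_sup[OF assms] by (meson order_trans)

lemma rn_nonneg: assumes "\<forall>k. \<bar>x k\<bar> \<le> B" shows "0 \<le> rn x"
  using rn_ge_coord[OF assms, of 0] by simp

end

context RS
begin

lemma D_add: "f \<in> DD \<Longrightarrow> x\<in>c0 \<Longrightarrow> y\<in>c0 \<Longrightarrow> f (\<lambda>k. x k + y k) = f x + f y"
  unfolding read_dual_def by blast
lemma D_hom: "f \<in> DD \<Longrightarrow> x\<in>c0 \<Longrightarrow> f (\<lambda>k. c * x k) = c * f x"
  unfolding read_dual_def by blast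
lemma D_out: "f \<in> DD \<Longrightarrow> x \<notin> c0 \<Longrightarrow> f x = 0"
  unfolding read_dual_def by blast

lemma c0_add: "x\<in>c0 \<Longrightarrow> y\<in>c0 \<Longrightarrow> (\<lambda>k. x k + y k) \<in> c0"
  unfolding c0_def using tendsto_add[of x 0 sequentially y 0] by simp
lemma c0_scale: "x\<in>c0 \<Longrightarrow> (\<lambda>k. c * x k) \<in> c0"
  unfolding c0_def using tendsto_mult_right_zero[of x sequentially c] by simp
lemma c0_zero: "(\<lambda>k. 0) \<in> c0" unfolding c0_def by simp
lemma unitvec_c0: "unitvec m \<in> c0" by (rule fin_c0[of "Suc m"]) (simp add: unitvec_def)

lemma D_bdd: assumes "f \<in> DD" shows "\<exists>C\<ge>0. \<forall>x\<in>c0. \<bar>f x\<bar> \<le> C * rn x"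
proof -
  obtain C where C: "\<forall>x\<in>c0. \<bar>f x\<bar> \<le> C * rn x" using assms unfolding read_dual_def by blast
  have "\<forall>x\<in>c0. \<bar>f x\<bar> \<le> max C 0 * rn x"
  proof
    fix x assume x: "x \<in> c0"
    then obtain B where "\<forall>k. \<bar>x k\<bar> \<le> B" using c0_bnd by blast
    hence "0 \<le> rn x" by (rule rn_nonneg)
    hence "C * rn x \<le> max C 0 * rn x" by (simp add: mult_right_mono)
    thus "\<bar>f x\<bar> \<le> max C 0 * rn x" using C x by force
  qed
  thus ?thesis by (intro exI[of _ "max C 0"]) simp
qed

lemma D_zero: assumes "f \<in> DD" shows "f (\<lambda>k. 0) = 0"
proof -
  have "f (\<lambda>k. 0 * (\<lambda>k. 0::real) k) = 0 * f (\<lambda>k. 0)" by (rule D_hom[OF assms c0_zero])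
  thus ?thesis by simp
qed

lemma D_finsum: assumes "f \<in> DD" shows "\<forall>k\<ge>m. x k = 0 \<Longrightarrow> f x = (\<Sum>k<m. f (unitvec k) * x k)"
proof (induction m arbitrary: x)
  case 0
  hence "x = (\<lambda>k. 0)" by auto
  thus ?case using D_zero[OF assms] by simp
next
  case (Suc m)
  define y where "y = (\<lambda>k. if k < m then x k else 0)"
  have ysupp: "\<forall>k\<ge>m. y k = 0" by (simp add: y_def)
  have yc0: "y \<in> c0" by (rule fin_c0[OF ysupp])
  have ex: "x = (\<lambda>k. y k + x m * unitvec m k)"
  proof
    fix k show "x k = y k + x m * unitvec m k"
      using Suc.prems by (cases "k < m"; cases "k = m") (auto simp: y_def unitvec_def)
  qed
  have "f x = f y + f (\<lambda>k. x m * unitvec m k)"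
    by (subst ex, rule D_add[OF assms yc0 c0_scale[OF unitvec_c0]])
  also have "f (\<lambda>k. x m * unitvec m k) = x m * f (unitvec m)" by (rule D_hom[OF assms unitvec_c0])
  also have "f y = (\<Sum>k<m. f (unitvec k) * y k)" by (rule Suc.IH[OF ysupp])
  also have "\<dots> = (\<Sum>k<m. f (unitvec k) * x k)" by (rule sum.cong) (auto simp: y_def)
  finally show ?case by (simp add: mult.commute)
qed

definition "Ball1 = {x\<in>c0. rn x \<le> 1}"

lemma zero_Ball1: "(\<lambda>k. 0) \<in> Ball1"
proof -
  have "rn (\<lambda>k. 0) \<le> 0 * K0" by (rule rn_le) simp
  thus ?thesis unfolding Ball1_def using c0_zero by simp
qed

lemma NN_bdd: assumes "f \<in> DD" shows "bdd_above ((\<lambda>x. \<bar>f x\<bar>) ` Ball1)"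
proof -
  obtain C where C: "C \<ge> 0" "\<forall>x\<in>c0. \<bar>f x\<bar> \<le> C * rn x" using D_bdd[OF assms] by blast
  have "\<forall>x\<in>Ball1. \<bar>f x\<bar> \<le> C"
  proof
    fix x assume "x \<in> Ball1"
    hence "x \<in> c0" "rn x \<le> 1" unfolding Ball1_def by auto
    hence "\<bar>f x\<bar> \<le> C * rn x" "C * rn x \<le> C" using C by (auto simp: mult_left_le)
    thus "\<bar>f x\<bar> \<le> C" by linarith
  qed
  thus ?thesis by (auto intro: bdd_aboveI2)
qed

lemma NN_def': "NN f = (SUP x\<in>Ball1. \<bar>f x\<bar>)" unfolding dual_norm_def Ball1_def by simp

lemma NN_upper: "f \<in> DD \<Longrightarrow> x \<in> c0 \<Longrightarrow> rn x \<le> 1 \<Longrightarrow> \<bar>f x\<bar> \<le> NN f"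
  unfolding NN_def' by (rule cSUP_upper[OF _ NN_bdd]) (auto simp: Ball1_def)

lemma NN_nonneg: "f \<in> DD \<Longrightarrow> 0 \<le> NN f"
  using NN_upper[of f "\<lambda>k. 0"] zero_Ball1 unfolding Ball1_def by fastforce

lemma rn_scale: assumes "\<forall>k. \<bar>x k\<bar> \<le> B" shows "rn (\<lambda>k. c * x k) \<le> \<bar>c\<bar> * rn x"
proof -
  have s: "supnorm (\<lambda>k. c * x k) \<le> \<bar>c\<bar> * supnorm x"
    by (rule sup_le) (simp add: abs_mult le_sup[OF assms] mult_left_mono)
  have Pc: "P n (\<lambda>k. c * x k) = c * P n x" for n
    by (simp add: P_eq sum_distrib_left mult.assoc)
  have "(\<Sum>n. wt a n * \<bar>P n (\<lambda>k. c * x k)\<bar>) = (\<Sum>n. \<bar>c\<bar> * (wt a n * \<bar>P n x\<bar>))"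
    by (simp add: Pc abs_mult mult.left_commute)
  also have "\<dots> = \<bar>c\<bar> * (\<Sum>n. wt a n * \<bar>P n x\<bar>)" by (rule suminf_mult[OF S_summable[OF assms]])
  finally show ?thesis using s unfolding read_norm_alt by (simp add: algebra_simps)
qed

lemma NN_bound: assumes f: "f \<in> DD" and x: "x \<in> c0" shows "\<bar>f x\<bar> \<le> NN f * rn x"
proof -
  obtain B where B: "\<forall>k. \<bar>x k\<bar> \<le> B" using c0_bnd[OF x] by blast
  show ?thesis
  proof (cases "rn x = 0")
    case True
    hence "x = (\<lambda>k. 0)" using rn_ge_coord[OF B] by (metis abs_le_zero_iff ext)
    moreover have "0 \<le> rn (\<lambda>k. 0)" by (rule rn_nonneg[of _ 0]) simp
    ultimately show ?thesis using D_zero[OF f] NN_nonneg[OF f] by simp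
  next
    case False
    hence r: "rn x > 0" using rn_nonneg[OF B] by simp
    define y where "y = (\<lambda>k. (1 / rn x) * x k)"
    have yc0: "y \<in> c0" unfolding y_def by (rule c0_scale[OF x])
    have "rn y \<le> \<bar>1 / rn x\<bar> * rn x" unfolding y_def by (rule rn_scale[OF B])
    also have "\<dots> = 1" using r by simp
    finally have "\<bar>f y\<bar> \<le> NN f" by (rule NN_upper[OF f yc0])
    moreover have "f y = (1 / rn x) * f x" unfolding y_def by (rule D_hom[OF f x])
    ultimately have "\<bar>f x\<bar> / rn x \<le> NN f" using r by (simp add: abs_mult)
    thus ?thesis using r by (simp add: field_simps)
  qed
qed

lemma NN_approx: assumes f: "f \<in> DD" and e: "e > 0" shows "\<exists>x\<in>c0. rn x \<le> 1 \<and> NN f - e < f x"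
proof -
  have "NN f - e < (SUP x\<in>Ball1. \<bar>f x\<bar>)" using e NN_def' by simp
  then obtain x where x: "x \<in> Ball1" and lt: "NN f - e < \<bar>f x\<bar>"
    using less_cSUP_iff[OF _ NN_bdd[OF f]] zero_Ball1 by blast
  have xc0: "x \<in> c0" and rx: "rn x \<le> 1" using x unfolding Ball1_def by auto
  show ?thesis
  proof (cases "f x \<ge> 0")
    case True thus ?thesis using xc0 rx lt by auto
  next
    case False
    obtain B where B: "\<forall>k. \<bar>x k\<bar> \<le> B" using c0_bnd[OF xc0] by blast
    define y where "y = (\<lambda>k. (-1) * x k)"
    have "y \<in> c0" unfolding y_def by (rule c0_scale[OF xc0])
    moreover have "rn y \<le> 1" using rn_scale[OF B, of "-1"] rx unfolding y_def by simp
    moreover have "f y = - f x" unfolding y_def using D_hom[OF f xc0, of "-1"] by simp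
    ultimately show ?thesis using False lt by (intro bexI[of _ y]) auto
  qed
qed

lemma D_comb: assumes f: "f \<in> DD" and g: "g \<in> DD" shows "(\<lambda>x. f x + t * g x) \<in> DD"
proof -
  obtain C1 where C1: "C1 \<ge> 0" "\<forall>x\<in>c0. \<bar>f x\<bar> \<le> C1 * rn x" using D_bdd[OF f] by blast
  obtain C2 where C2: "C2 \<ge> 0" "\<forall>x\<in>c0. \<bar>g x\<bar> \<le> C2 * rn x" using D_bdd[OF g] by blast
  have bd: "\<forall>x\<in>c0. \<bar>f x + t * g x\<bar> \<le> (C1 + \<bar>t\<bar> * C2) * rn x"
  proof
    fix x assume x: "x \<in> c0"
    have "\<bar>f x + t * g x\<bar> \<le> \<bar>f x\<bar> + \<bar>t\<bar> * \<bar>g x\<bar>" by (simp add: abs_mult[symmetric] abs_triangle_ineq)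
    also have "\<dots> \<le> C1 * rn x + \<bar>t\<bar> * (C2 * rn x)"
      using C1 C2 x by (intro add_mono mult_left_mono) auto
    finally show "\<bar>f x + t * g x\<bar> \<le> (C1 + \<bar>t\<bar> * C2) * rn x" by (simp add: algebra_simps)
  qed
  show ?thesis unfolding read_dual_def mem_Collect_eq
  proof (intro conjI ballI allI impI)
    show "\<exists>C. \<forall>x\<in>c0. \<bar>f x + t * g x\<bar> \<le> C * rn x" using bd by blast
  next
    fix x y assume "x \<in> c0" "y \<in> c0"
    thus "f (\<lambda>k. x k + y k) + t * g (\<lambda>k. x k + y k) = f x + t * g x + (f y + t * g y)"
      using D_add[OF f] D_add[OF g] by (simp add: algebra_simps)
  next
    fix c x assume "x \<in> c0"
    thus "f (\<lambda>k. c * x k) + t * g (\<lambda>k. c * x k) = c * (f x + t * g x)"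
      using D_hom[OF f] D_hom[OF g] by (simp add: algebra_simps)
  next
    fix x assume "x \<notin> c0"
    thus "f x + t * g x = 0" using D_out[OF f] D_out[OF g] by simp
  qed
qed

lemma D_scale: assumes g: "g \<in> DD" shows "(\<lambda>x. c * g x) \<in> DD"
proof -
  have "(\<lambda>x. (\<lambda>x. 0) x + c * g x) \<in> DD"
  proof (rule D_comb[OF _ g])
    show "(\<lambda>x. 0) \<in> DD" unfolding read_dual_def by (auto intro: exI[of _ 0])
  qed
  thus ?thesis by simp
qed

end

definition Fh :: "((nat \<Rightarrow> real) \<Rightarrow> real) \<Rightarrow> (nat \<Rightarrow> real) \<Rightarrow> real" where
  "Fh h z = (\<Sum>k. h (unitvec k) * z k)"

lemma ab_le: "\<bar>y\<bar> \<le> B \<Longrightarrow> \<bar>c * y\<bar> \<le> B * \<bar>c::real\<bar>"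
  by (metis abs_ge_zero abs_mult mult.commute mult_left_mono)

context RS
begin

lemma K0_ge1: "1 \<le> K0"
  unfolding K0_def using suminf_nonneg[OF cc_summable cc_nonneg] by simp

lemma coef_summable: assumes f: "f \<in> DD" shows "summable (\<lambda>k. \<bar>f (unitvec k)\<bar>)"
proof (rule bounded_imp_summable)
  fix n
  define m where "m = Suc n"
  define x where "x = (\<lambda>k. if k < m then sgn (f (unitvec k)) else 0)"
  have xs: "\<forall>k\<ge>m. x k = 0" by (simp add: x_def)
  have xb: "\<forall>k. \<bar>x k\<bar> \<le> 1" by (simp add: x_def abs_sgn_eq)
  have "f x = (\<Sum>k<m. f (unitvec k) * x k)" by (rule D_finsum[OF f xs])
  also have "\<dots> = (\<Sum>k<m. \<bar>f (unitvec k)\<bar>)"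
    by (rule sum.cong) (auto simp: x_def sgn_real_def)
  also have "\<dots> = (\<Sum>k\<le>n. \<bar>f (unitvec k)\<bar>)" by (simp add: m_def lessThan_Suc_atMost)
  finally have eq: "f x = (\<Sum>k\<le>n. \<bar>f (unitvec k)\<bar>)" .
  have "\<bar>f x\<bar> \<le> NN f * rn x" by (rule NN_bound[OF f fin_c0[OF xs]])
  also have "\<dots> \<le> NN f * (1 * K0)" by (rule mult_left_mono[OF rn_le[OF xb] NN_nonneg[OF f]])
  finally show "(\<Sum>k\<le>n. \<bar>f (unitvec k)\<bar>) \<le> NN f * K0" using eq by simp
qed simp

lemma Fh_summable: assumes f: "f \<in> DD" and z: "\<forall>k. \<bar>z k\<bar> \<le> B"
  shows "summable (\<lambda>k. f (unitvec k) * z k)"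
proof (rule summable_comparison_test[where g = "\<lambda>k. B * \<bar>f (unitvec k)\<bar>"])
  show "\<exists>N. \<forall>n\<ge>N. norm (f (unitvec n) * z n) \<le> B * \<bar>f (unitvec n)\<bar>"
    using z ab_le by auto
  show "summable (\<lambda>k. B * \<bar>f (unitvec k)\<bar>)" by (rule summable_mult[OF coef_summable[OF f]])
qed

lemma Fh_c0: assumes f: "f \<in> DD" and x: "x \<in> c0" shows "Fh f x = f x"
proof -
  obtain B where B: "\<forall>k. \<bar>x k\<bar> \<le> B" using c0_bnd[OF x] by blast
  define tr where "tr m = (\<lambda>k. if k < m then x k else 0)" for m
  define tl where "tl m = (\<lambda>k. if k < m then 0 else x k)" for m
  have trc0: "tr m \<in> c0" for m by (rule fin_c0[of m]) (simp add: tr_def)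
  have tlc0: "tl m \<in> c0" for m
  proof -
    have "tl m = (\<lambda>k. x k + (-1) * tr m k)" by (auto simp: tl_def tr_def)
    moreover have "(\<lambda>k. x k + (-1) * tr m k) \<in> c0" by (rule c0_add[OF x c0_scale[OF trc0]])
    ultimately show ?thesis by simp
  qed
  have split: "f x = f (tr m) + f (tl m)" for m
  proof -
    have "x = (\<lambda>k. tr m k + tl m k)" by (auto simp: tl_def tr_def)
    hence "f x = f (\<lambda>k. tr m k + tl m k)" by simp
    thus ?thesis using D_add[OF f trc0 tlc0] by simp
  qed
  have ps: "(\<Sum>k<m. f (unitvec k) * x k) = f (tr m)" for m
  proof -
    have "f (tr m) = (\<Sum>k<m. f (unitvec k) * tr m k)" by (rule D_finsum[OF f]) (simp add: tr_def)
    also have "\<dots> = (\<Sum>k<m. f (unitvec k) * x k)" by (rule sum.cong) (auto simp: tr_def)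
    finally show ?thesis by simp
  qed
  have lim: "(\<lambda>m. f (tr m)) \<longlonglongrightarrow> f x"
  proof (rule LIMSEQ_I)
    fix r :: real assume r: "r > 0"
    define e where "e = r / (NN f * K0 + 1)"
    have den: "NN f * K0 + 1 > 0" using NN_nonneg[OF f] K0_ge1 by (simp add: add_nonneg_pos)
    hence e: "e > 0" using r by (simp add: e_def)
    have "x \<longlonglongrightarrow> 0" using x by (simp add: c0_def)
    then obtain M where M: "\<forall>k\<ge>M. norm (x k - 0) < e" using LIMSEQ_D[OF _ e] by blast
    show "\<exists>no. \<forall>n\<ge>no. norm (f (tr n) - f x) < r"
    proof (intro exI allI impI)
      fix n assume n: "M \<le> n"
      have tlb: "\<forall>k. \<bar>tl n k\<bar> \<le> e" using M n e by (auto simp: tl_def less_imp_le)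
      have "\<bar>f (tl n)\<bar> \<le> NN f * rn (tl n)" by (rule NN_bound[OF f tlc0])
      also have "\<dots> \<le> NN f * (e * K0)" by (rule mult_left_mono[OF rn_le[OF tlb] NN_nonneg[OF f]])
      also have "\<dots> = e * (NN f * K0)" by simp
      also have "\<dots> < e * (NN f * K0 + 1)" using e by simp
      also have "\<dots> = r" using den by (simp add: e_def)
      finally show "norm (f (tr n) - f x) < r" using split[of n] by simp
    qed
  qed
  have "(\<lambda>m. (\<Sum>k<m. f (unitvec k) * x k)) \<longlonglongrightarrow> Fh f x"
    unfolding Fh_def by (rule summable_LIMSEQ[OF Fh_summable[OF f B]])
  hence "(\<lambda>m. f (tr m)) \<longlonglongrightarrow> Fh f x" using ps by simp
  thus ?thesis using lim LIMSEQ_unique by blast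
qed

lemma rn_trunc: assumes z: "\<forall>k. \<bar>z k\<bar> \<le> B"
  shows "rn (\<lambda>k. if k < M then z k else 0) \<le> rn z + 8 * B * (1/2)^M"
proof -
  define tr where "tr = (\<lambda>k. if k < M then z k else 0)"
  have B0: "0 \<le> B" using z by (meson abs_ge_zero order_trans)
  have trb: "\<forall>k. \<bar>tr k\<bar> \<le> B" using z B0 by (simp add: tr_def)
  have sup: "supnorm tr \<le> supnorm z"
    by (rule sup_le) (auto simp: tr_def intro: le_sup[OF z] order_trans[OF _ le_sup[OF z]])
  have tm: "wt a n * \<bar>P n tr\<bar> \<le> wt a n * \<bar>P n z\<bar> + 4 * B * (1/2)^M * (1/2)^n" for n
  proof (cases "a n < M")
    case True
    have "P n tr = P n z" unfolding P_eq by (rule sum.cong) (use True in \<open>auto simp: tr_def\<close>)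
    thus ?thesis using B0 by simp
  next
    case False
    have h1: "(1/2::real)^(a n) \<le> (1/2)^M" by (rule power_decreasing) (use False in auto)
    have h2: "(1/2::real)^(a n) \<le> (1/2)^n" by (rule power_decreasing[OF a_ge]) auto
    have "(1/2::real)^(a n) * (1/2)^(a n) \<le> (1/2)^M * (1/2)^n"
      by (rule mult_mono[OF h1 h2]) auto
    hence "B * (4 * (1/2)^(a n) * (1/2)^(a n)) \<le> B * (4 * ((1/2)^M * (1/2)^n))"
      using B0 by (intro mult_left_mono) auto
    moreover have "B * cc n \<le> B * (4 * (1/2)^(a n) * (1/2)^(a n))"
      by (rule mult_left_mono[OF wt_bound B0])
    ultimately have "wt a n * \<bar>P n tr\<bar> \<le> 4 * B * (1/2)^M * (1/2)^n"
      using S_bound[OF trb, of n] by (simp add: algebra_simps)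
    thus ?thesis using S_nonneg[of n z] by linarith
  qed
  have sg: "summable (\<lambda>n. 4 * B * (1/2::real)^M * (1/2)^n)"
    by (intro summable_mult summable_geometric) simp
  have "(\<Sum>n. wt a n * \<bar>P n tr\<bar>) \<le> (\<Sum>n. wt a n * \<bar>P n z\<bar> + 4 * B * (1/2)^M * (1/2)^n)"
    by (rule suminf_le[OF tm S_summable[OF trb] summable_add[OF S_summable[OF z] sg]])
  also have "\<dots> = (\<Sum>n. wt a n * \<bar>P n z\<bar>) + (\<Sum>n. 4 * B * (1/2)^M * (1/2::real)^n)"
    by (rule suminf_add[OF S_summable[OF z] sg, symmetric])
  also have "(\<Sum>n. 4 * B * (1/2)^M * (1/2::real)^n) = 4 * B * (1/2)^M * (\<Sum>n. (1/2::real)^n)"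
    by (rule suminf_mult) (intro summable_geometric, simp)
  also have "(\<Sum>n. (1/2::real)^n) = 2" by (subst suminf_geometric) auto
  finally have "(\<Sum>n. wt a n * \<bar>P n tr\<bar>) \<le> (\<Sum>n. wt a n * \<bar>P n z\<bar>) + 8 * B * (1/2)^M" by simp
  thus ?thesis using sup unfolding read_norm_alt tr_def[symmetric] by simp
qed

lemma Fh_bound: assumes f: "f \<in> DD" and z: "\<forall>k. \<bar>z k\<bar> \<le> B" shows "\<bar>Fh f z\<bar> \<le> NN f * rn z"
proof -
  define tr where "tr M = (\<lambda>k. if k < M then z k else 0)" for M
  have trc0: "tr M \<in> c0" for M by (rule fin_c0[of M]) (simp add: tr_def)
  have ps: "(\<Sum>k<M. f (unitvec k) * z k) = f (tr M)" for M
  proof -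
    have "f (tr M) = (\<Sum>k<M. f (unitvec k) * tr M k)" by (rule D_finsum[OF f]) (simp add: tr_def)
    also have "\<dots> = (\<Sum>k<M. f (unitvec k) * z k)" by (rule sum.cong) (auto simp: tr_def)
    finally show ?thesis by simp
  qed
  have "(\<lambda>M. (\<Sum>k<M. f (unitvec k) * z k)) \<longlonglongrightarrow> Fh f z"
    unfolding Fh_def by (rule summable_LIMSEQ[OF Fh_summable[OF f z]])
  hence l1: "(\<lambda>M. \<bar>f (tr M)\<bar>) \<longlonglongrightarrow> \<bar>Fh f z\<bar>" using ps by (simp add: tendsto_rabs)
  have l2: "(\<lambda>M. NN f * (rn z + 8 * B * (1/2)^M)) \<longlonglongrightarrow> NN f * (rn z + 8 * B * 0)"
    by (intro tendsto_intros) simp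
  have le: "\<bar>f (tr M)\<bar> \<le> NN f * (rn z + 8 * B * (1/2)^M)" for M
  proof -
    have "\<bar>f (tr M)\<bar> \<le> NN f * rn (tr M)" by (rule NN_bound[OF f trc0])
    also have "\<dots> \<le> NN f * (rn z + 8 * B * (1/2)^M)"
      by (rule mult_left_mono[OF _ NN_nonneg[OF f]]) (unfold tr_def, rule rn_trunc[OF z])
    finally show ?thesis .
  qed
  have "\<bar>Fh f z\<bar> \<le> NN f * (rn z + 8 * B * 0)"
    by (rule LIMSEQ_le[OF l1 l2]) (use le in auto)
  thus ?thesis by simp
qed

lemma Fh_lin: assumes f: "f \<in> DD" and g: "g \<in> DD" and z: "\<forall>k. \<bar>z k\<bar> \<le> B"
  shows "Fh (\<lambda>x. f x + t * g x) z = Fh f z + t * Fh g z"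
proof -
  have "Fh f z + t * Fh g z = (\<Sum>k. f (unitvec k) * z k) + (\<Sum>k. t * (g (unitvec k) * z k))"
    unfolding Fh_def by (simp add: suminf_mult[OF Fh_summable[OF g z]])
  also have "\<dots> = (\<Sum>k. f (unitvec k) * z k + t * (g (unitvec k) * z k))"
    by (rule suminf_add[OF Fh_summable[OF f z] summable_mult[OF Fh_summable[OF g z]]])
  finally show ?thesis unfolding Fh_def by (simp add: algebra_simps)
qed

lemma Fh_scale: assumes g: "g \<in> DD" and z: "\<forall>k. \<bar>z k\<bar> \<le> B"
  shows "Fh (\<lambda>x. c * g x) z = c * Fh g z"
  unfolding Fh_def using suminf_mult[OF Fh_summable[OF g z], of c] by (simp add: algebra_simps)

lemma Fh_addz: assumes f: "f \<in> DD" and y: "\<forall>k. \<bar>y k\<bar> \<le> B" and z: "\<forall>k. \<bar>z k\<bar> \<le> B'"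
  shows "Fh f (\<lambda>k. y k + z k) = Fh f y + Fh f z"
  unfolding Fh_def using suminf_add[OF Fh_summable[OF f y] Fh_summable[OF f z]]
  by (simp add: algebra_simps)

lemma Fh_lim: assumes f: "f \<in> DD" and xb: "\<forall>j k. \<bar>x j k\<bar> \<le> B"
  and lim: "\<forall>k. (\<lambda>j. x j k) \<longlonglongrightarrow> z k"
  shows "(\<lambda>j. Fh f (x j)) \<longlonglongrightarrow> Fh f z"
proof -
  have "eventually (\<lambda>n. summable (\<lambda>k. norm (f (unitvec k) * x n k))) sequentially \<and>
        summable (\<lambda>n. norm (f (unitvec n) * z n)) \<and>
        ((\<lambda>n. suminf (\<lambda>k. f (unitvec k) * x n k)) \<longlongrightarrow> suminf (\<lambda>k. f (unitvec k) * z k)) sequentially"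
  proof (rule tannerys_theorem[where M = "\<lambda>k. B * \<bar>f (unitvec k)\<bar>"])
    show "\<And>k. ((\<lambda>n. f (unitvec k) * x n k) \<longlongrightarrow> f (unitvec k) * z k) sequentially"
      using lim by (intro tendsto_intros) auto
    show "\<forall>\<^sub>F (k, n) in at_top \<times>\<^sub>F sequentially. norm (f (unitvec k) * x n k) \<le> B * \<bar>f (unitvec k)\<bar>"
      by (rule always_eventually) (use xb ab_le in auto)
    show "summable (\<lambda>k. B * \<bar>f (unitvec k)\<bar>)" by (rule summable_mult[OF coef_summable[OF f]])
  qed simp
  thus ?thesis unfolding Fh_def by blast
qed

lemma P_lim: assumes lim: "\<forall>k. (\<lambda>j. x j k) \<longlonglongrightarrow> z k" shows "(\<lambda>j. P n (x j)) \<longlonglongrightarrow> P n z"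
  unfolding P_eq using lim by (intro tendsto_intros) auto

lemma rn_lsc: assumes rb: "\<forall>j. rn (x j) \<le> 1" and xb: "\<forall>j k. \<bar>x j k\<bar> \<le> 1"
  and lim: "\<forall>k. (\<lambda>j. x j k) \<longlonglongrightarrow> z k"
  shows "rn z \<le> 1" and "\<forall>k. \<bar>z k\<bar> \<le> 1"
proof -
  show zb: "\<forall>k. \<bar>z k\<bar> \<le> 1"
  proof
    fix k
    have "(\<lambda>j. \<bar>x j k\<bar>) \<longlonglongrightarrow> \<bar>z k\<bar>" using lim by (intro tendsto_intros) auto
    thus "\<bar>z k\<bar> \<le> 1" by (rule LIMSEQ_le_const2) (use xb in auto)
  qed
  have main: "\<bar>z k\<bar> + (\<Sum>n<N. wt a n * \<bar>P n z\<bar>) \<le> 1" for k N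
  proof -
    have L: "(\<lambda>j. \<bar>x j k\<bar> + (\<Sum>n<N. wt a n * \<bar>P n (x j)\<bar>)) \<longlonglongrightarrow> \<bar>z k\<bar> + (\<Sum>n<N. wt a n * \<bar>P n z\<bar>)"
      using lim P_lim[OF lim] by (intro tendsto_intros) auto
    have U: "\<bar>x j k\<bar> + (\<Sum>n<N. wt a n * \<bar>P n (x j)\<bar>) \<le> 1" for j
    proof -
      have xjb: "\<forall>k. \<bar>x j k\<bar> \<le> 1" using xb by auto
      have "(\<Sum>n<N. wt a n * \<bar>P n (x j)\<bar>) \<le> (\<Sum>n. wt a n * \<bar>P n (x j)\<bar>)"
        by (rule sum_le_suminf[OF S_summable[OF xjb]]) (auto intro: S_nonneg)
      moreover have "\<bar>x j k\<bar> \<le> supnorm (x j)" by (rule le_sup[OF xjb])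
      ultimately show ?thesis using rb unfolding read_norm_alt by (meson add_mono order_trans)
    qed
    show ?thesis by (rule LIMSEQ_le_const2[OF L]) (use U in auto)
  qed
  have "supnorm z + (\<Sum>n<N. wt a n * \<bar>P n z\<bar>) \<le> 1" for N
  proof -
    have "supnorm z \<le> 1 - (\<Sum>n<N. wt a n * \<bar>P n z\<bar>)" 
    proof (rule sup_le, rule allI)
      fix k show "\<bar>z k\<bar> \<le> 1 - (\<Sum>n<N. wt a n * \<bar>P n z\<bar>)" using main[of k N] by linarith
    qed
    thus ?thesis by simp
  qed
  hence "(\<Sum>n. wt a n * \<bar>P n z\<bar>) \<le> 1 - supnorm z"
    by (intro suminf_le_const[OF S_summable[OF zb]]) (simp add: algebra_simps)
  thus "rn z \<le> 1" unfolding read_norm_alt by simp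
qed

end

lemma seqc_ex:
  fixes x :: "nat \<Rightarrow> nat \<Rightarrow> real" and S :: "(nat \<Rightarrow> real) set"
  assumes sc: "seq_compact S" and xs: "\<forall>j. x j \<in> S"
  shows "\<exists>r l. strict_mono r \<and> (x \<circ> r) \<longlonglongrightarrow> l"
  using sc xs unfolding seq_compact_def by blast

lemma coordseq:
  fixes x :: "nat \<Rightarrow> nat \<Rightarrow> real"
  assumes "\<And>j k. \<bar>x j k\<bar> \<le> 1"
  shows "\<exists>r z. strict_mono r \<and> (\<forall>k. (\<lambda>j. x (r j) k) \<longlonglongrightarrow> z k)"
proof -
  let ?S = "PiE UNIV (\<lambda>_::nat. {-1..1::real})"
  have "compactin (product_topology (\<lambda>i. euclidean) UNIV) ?S"
    by (simp add: compactin_PiE)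
  hence "compact ?S" by (simp add: euclidean_product_topology)
  hence sc: "seq_compact ?S" by (rule compact_imp_seq_compact)
  have xs: "\<forall>j. x j \<in> ?S" using assms by (auto simp: abs_le_iff)
  obtain r l where r: "strict_mono r" and lim: "(x \<circ> r) \<longlonglongrightarrow> l"
    using seqc_ex[OF sc xs] by blast
  have "(\<lambda>j. x (r j) k) \<longlonglongrightarrow> l k" for k
  proof -
    have "isCont (\<lambda>y::nat\<Rightarrow>real. y k) l"
      using continuous_on_eq_continuous_at[OF open_UNIV, of "\<lambda>y::nat\<Rightarrow>real. y k"]
        continuous_on_product_coordinates[of k] by simp
    from isCont_tendsto_compose[OF this lim] show ?thesis by (simp add: o_def)
  qed
  thus ?thesis using r by blast
qed

lemma abs_mult_le: "\<bar>x\<bar> \<le> 1 \<Longrightarrow> \<bar>y\<bar> \<le> e \<Longrightarrow> \<bar>x * y\<bar> \<le> (e::real)"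
proof -
  assume "\<bar>x\<bar> \<le> 1" "\<bar>y\<bar> \<le> e"
  hence "\<bar>x\<bar> * \<bar>y\<bar> \<le> 1 * e" by (intro mult_mono) auto
  thus ?thesis by (simp add: abs_mult)
qed

context RS
begin

lemma cluster:
  assumes f: "f \<in> DD" and xc: "\<forall>j. x j \<in> c0" and xr: "\<forall>j. rn (x j) \<le> 1"
    and lim: "(\<lambda>j. f (x j)) \<longlonglongrightarrow> NN f"
  shows "\<exists>r z. strict_mono r \<and> (\<forall>k. \<bar>z k\<bar> \<le> 1) \<and> rn z \<le> 1 \<and> Fh f z = NN f \<and>
     (\<forall>g\<in>DD. (\<lambda>j. g (x (r j))) \<longlonglongrightarrow> Fh g z)"
proof -
  have xb: "\<forall>j k. \<bar>x j k\<bar> \<le> 1"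
  proof (intro allI)
    fix j k
    obtain B where "\<forall>k. \<bar>x j k\<bar> \<le> B" using c0_bnd xc by blast
    thus "\<bar>x j k\<bar> \<le> 1" using rn_ge_coord xr by (meson order_trans)
  qed
  obtain r z where r: "strict_mono r" and zl: "\<forall>k. (\<lambda>j. x (r j) k) \<longlonglongrightarrow> z k"
    using coordseq[of x] xb by blast
  have yb: "\<forall>j k. \<bar>x (r j) k\<bar> \<le> 1" using xb by blast
  have yr: "\<forall>j. rn (x (r j)) \<le> 1" using xr by blast
  have zr: "rn z \<le> 1" and zb: "\<forall>k. \<bar>z k\<bar> \<le> 1" using rn_lsc[OF yr yb zl] by auto
  have gl: "(\<lambda>j. g (x (r j))) \<longlonglongrightarrow> Fh g z" if g: "g \<in> DD" for g
  proof -
    have "(\<lambda>j. Fh g (x (r j))) \<longlonglongrightarrow> Fh g z" by (rule Fh_lim[OF g yb zl])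
    moreover have "Fh g (x (r j)) = g (x (r j))" for j using Fh_c0[OF g] xc by blast
    ultimately show ?thesis by simp
  qed
  have "(\<lambda>j. f (x (r j))) \<longlonglongrightarrow> NN f" using LIMSEQ_subseq_LIMSEQ[OF lim r] by (simp add: o_def)
  hence "Fh f z = NN f" using gl[OF f] LIMSEQ_unique by blast
  thus ?thesis using r zb zr gl by blast
qed

lemma P_v: assumes v: "u n = v" shows "P n x = pair x v - x (a n)"
proof -
  have "P n x = (\<Sum>k\<le>a n. x k * v k - x k * unitvec (a n) k)"
    unfolding P_eq by (simp add: vv_def v algebra_simps)
  also have "\<dots> = (\<Sum>k\<le>a n. x k * v k) - (\<Sum>k\<le>a n. x k * unitvec (a n) k)"
    by (rule sum_subtractf)
  also have "(\<Sum>k\<le>a n. x k * unitvec (a n) k) = x (a n)"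
    by (simp add: unitvec_def if_distrib cong: if_cong)
  also have "(\<Sum>k\<le>a n. x k * v k) = pair x v"
  proof (rule pair_eq[symmetric])
    show "{k. v k \<noteq> 0} \<subseteq> {..a n}"
    proof
      fix k assume "k \<in> {k. v k \<noteq> 0}"
      hence "u n k \<noteq> 0" using v by simp
      hence "k < a n" by (rule u_supp)
      thus "k \<in> {..a n}" by simp
    qed
  qed simp
  finally show ?thesis .
qed

lemma Fh_zero: "Fh f (\<lambda>k. 0) = 0" by (simp add: Fh_def)

lemma unique:
  assumes f: "f \<in> DD" and pos: "NN f > 0"
    and pb: "\<forall>k. \<bar>p k\<bar> \<le> 1" and pr: "rn p \<le> 1" and pf: "Fh f p = NN f"
    and qb: "\<forall>k. \<bar>q k\<bar> \<le> 1" and qr: "rn q \<le> 1" and qf: "Fh f q = NN f"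
  shows "p = q"
proof (rule ccontr)
  assume ne: "p \<noteq> q"
  show False
  proof (cases "\<forall>i j. p i * q j = p j * q i")
    case True
    have "q \<noteq> (\<lambda>k. 0)" using qf pos Fh_zero by auto
    then obtain j where qj: "q j \<noteq> 0" by auto
    define l where "l = p j / q j"
    have "p = (\<lambda>k. l * q k)"
    proof
      fix k have "p k * q j = p j * q k" using True by auto
      thus "p k = l * q k" using qj unfolding l_def by (simp add: field_simps)
    qed
    hence "Fh f p = l * Fh f q" using Fh_scale[OF f qb] Fh_def
      by (simp add: Fh_def suminf_mult[OF Fh_summable[OF f qb], symmetric] algebra_simps)
    hence "l = 1" using pf qf pos by simp
    hence "p = q" using \<open>p = (\<lambda>k. l * q k)\<close> by simp
    thus False using ne by simp
  next
    case False
    then obtain i j where dt: "p i * q j - p j * q i \<noteq> 0" by auto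
    define Dt where "Dt = p i * q j - p j * q i"
    define vi where "vi = (3 * q j + 3 * p j) / Dt"
    define vj where "vj = (-3 * p i - 3 * q i) / Dt"
    have ij: "i \<noteq> j" using dt by auto
    have Dt0: "Dt \<noteq> 0" using dt by (simp add: Dt_def)
    have e1: "p i * vi + p j * vj = 3"
    proof -
      have "p i * vi + p j * vj = (p i * (3 * q j + 3 * p j) + p j * (-3 * p i - 3 * q i)) / Dt"
        using Dt0 by (simp add: vi_def vj_def field_simps)
      also have "\<dots> = (3 * Dt) / Dt"
        by (rule arg_cong[where f="\<lambda>t. t / Dt"]) (simp add: Dt_def algebra_simps)
      finally show ?thesis using Dt0 by simp
    qed
    have e2: "q i * vi + q j * vj = -3"
    proof -
      have "q i * vi + q j * vj = (q i * (3 * q j + 3 * p j) + q j * (-3 * p i - 3 * q i)) / Dt"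
        using Dt0 by (simp add: vi_def vj_def field_simps)
      also have "\<dots> = (-3 * Dt) / Dt"
        by (rule arg_cong[where f="\<lambda>t. t / Dt"]) (simp add: Dt_def algebra_simps)
      finally show ?thesis using Dt0 by simp
    qed
    obtain ri where ri: "ri \<in> \<rat>" "vi - 1/4 < ri" "ri < vi + 1/4"
      using Rats_dense_in_real[of "vi - 1/4" "vi + 1/4"] by auto
    obtain rj where rj: "rj \<in> \<rat>" "vj - 1/4 < rj" "rj < vj + 1/4"
      using Rats_dense_in_real[of "vj - 1/4" "vj + 1/4"] by auto
    define v where "v = (\<lambda>k. if k = i then ri else if k = j then rj else 0)"
    have "v \<in> c00Q"
    proof -
      have "{k. v k \<noteq> 0} \<subseteq> {i, j}" by (auto simp: v_def split: if_splits)
      hence "finite {k. v k \<noteq> 0}" by (rule finite_subset) simp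
      moreover have "\<forall>k. v k \<in> \<rat>" using ri rj by (simp add: v_def)
      ultimately show ?thesis by (simp add: c00Q_def)
    qed
    hence "{n. u n = v} \<noteq> {}" using uinf infinite_imp_nonempty by blast
    then obtain n where un: "u n = v" by auto
    have pv: "pair x v = x i * ri + x j * rj" for x
    proof -
      have "pair x v = (\<Sum>k\<in>{i,j}. x k * v k)" by (rule pair_eq) (auto simp: v_def split: if_splits)
      thus ?thesis using ij by (simp add: v_def)
    qed
    have ai: "\<bar>p i * (ri - vi)\<bar> \<le> 1/4" "\<bar>p j * (rj - vj)\<bar> \<le> 1/4"
      "\<bar>q i * (ri - vi)\<bar> \<le> 1/4" "\<bar>q j * (rj - vj)\<bar> \<le> 1/4"
    proof -
      have d1: "\<bar>ri - vi\<bar> \<le> 1/4" "\<bar>rj - vj\<bar> \<le> 1/4" using ri rj unfolding abs_le_iff by linarith+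
      show "\<bar>p i * (ri - vi)\<bar> \<le> 1/4" by (rule abs_mult_le[OF _ d1(1)]) (use pb in auto)
      show "\<bar>p j * (rj - vj)\<bar> \<le> 1/4" by (rule abs_mult_le[OF _ d1(2)]) (use pb in auto)
      show "\<bar>q i * (ri - vi)\<bar> \<le> 1/4" by (rule abs_mult_le[OF _ d1(1)]) (use qb in auto)
      show "\<bar>q j * (rj - vj)\<bar> \<le> 1/4" by (rule abs_mult_le[OF _ d1(2)]) (use qb in auto)
    qed
    have "pair p v = 3 + p i * (ri - vi) + p j * (rj - vj)" using pv e1 by (simp add: algebra_simps)
    hence P1: "P n p > 0" using P_v[OF un, of p] ai pb[rule_format, of "a n"] unfolding abs_le_iff by linarith
    have "pair q v = -3 + q i * (ri - vi) + q j * (rj - vj)" using pv e2 by (simp add: algebra_simps)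
    hence P2: "P n q < 0" using P_v[OF un, of q] ai qb[rule_format, of "a n"] unfolding abs_le_iff by linarith
    define s where "s = (\<lambda>k. p k + q k)"
    have sb: "\<forall>k. \<bar>s k\<bar> \<le> 2" 
    proof
      fix k show "\<bar>s k\<bar> \<le> 2" using pb[rule_format, of k] qb[rule_format, of k] unfolding s_def abs_le_iff by linarith
    qed
    have Ps: "P m s = P m p + P m q" for m unfolding P_eq s_def by (simp add: algebra_simps sum.distrib)
    have strict: "\<bar>P n s\<bar> < \<bar>P n p\<bar> + \<bar>P n q\<bar>" using P1 P2 Ps by simp
    have "Fh f s = 2 * NN f" unfolding s_def using Fh_addz[OF f pb qb] pf qf by simp
    hence "2 * NN f \<le> NN f * rn s" using Fh_bound[OF f sb] by simp
    hence rs: "2 \<le> rn s" using pos by simp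
    have sup: "supnorm s \<le> supnorm p + supnorm q"
      by (rule sup_le) (auto simp: s_def intro!: order_trans[OF abs_triangle_ineq] add_mono le_sup[OF pb] le_sup[OF qb])
    define tp where "tp m = wt a m * \<bar>P m p\<bar>" for m
    define tq where "tq m = wt a m * \<bar>P m q\<bar>" for m
    define ts where "ts m = wt a m * \<bar>P m s\<bar>" for m
    have sp: "summable tp" unfolding tp_def by (rule S_summable[OF pb])
    have sq: "summable tq" unfolding tq_def by (rule S_summable[OF qb])
    have ss: "summable ts" unfolding ts_def by (rule S_summable[OF sb])
    have hn: "0 \<le> tp m + tq m - ts m" for m
    proof -
      have "\<bar>P m s\<bar> \<le> \<bar>P m p\<bar> + \<bar>P m q\<bar>" using Ps abs_triangle_ineq by simp
      hence "wt a m * \<bar>P m s\<bar> \<le> wt a m * (\<bar>P m p\<bar> + \<bar>P m q\<bar>)"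
        using wt_pos[of m] by (intro mult_left_mono) auto
      thus ?thesis unfolding tp_def tq_def ts_def by (simp add: algebra_simps)
    qed
    have hp: "0 < tp n + tq n - ts n"
    proof -
      have "wt a n * \<bar>P n s\<bar> < wt a n * (\<bar>P n p\<bar> + \<bar>P n q\<bar>)"
        using wt_pos[of n] strict by (intro mult_strict_left_mono) auto
      thus ?thesis unfolding tp_def tq_def ts_def by (simp add: algebra_simps)
    qed
    have sh: "summable (\<lambda>m. tp m + tq m - ts m)" by (intro summable_diff summable_add sp sq ss)
    have "0 < (\<Sum>m. tp m + tq m - ts m)" by (rule suminf_pos2[OF sh hn hp])
    also have "(\<Sum>m. tp m + tq m - ts m) = suminf tp + suminf tq - suminf ts"
      using suminf_diff[OF summable_add[OF sp sq] ss] suminf_add[OF sp sq] by simp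
    finally have "suminf ts < suminf tp + suminf tq" by simp
    hence "rn s < rn p + rn q" using sup unfolding read_norm_alt tp_def tq_def ts_def by simp
    thus False using rs pr qr by simp
  qed
qed

end

lemma lim1: "(\<lambda>j. 1 / (real j + 1)) \<longlonglongrightarrow> 0"
proof -
  have "(\<lambda>j. 1 / (real j + 1)) = (\<lambda>n. inverse (real (Suc n)))"
    by (rule ext) (simp add: inverse_eq_divide add.commute)
  thus ?thesis using LIMSEQ_inverse_real_of_nat by simp
qed

context RS
begin

lemma NN_pos: assumes f: "f \<in> DD" and nz: "f \<noteq> (\<lambda>_. 0)" shows "0 < NN f"
proof -
  obtain x where fx: "f x \<noteq> 0" using nz by auto
  hence xc: "x \<in> c0" using D_out[OF f] by blast
  have "\<bar>f x\<bar> \<le> NN f * rn x" by (rule NN_bound[OF f xc])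
  moreover have "0 \<le> NN f" by (rule NN_nonneg[OF f])
  ultimately show ?thesis using fx by (cases "NN f = 0") auto
qed

lemma seq_lim:
  assumes f: "f \<in> DD" and xc: "\<forall>j. x j \<in> c0" and xr: "\<forall>j. rn (x j) \<le> 1"
    and lo: "\<forall>j. NN f - e j < f (x j)" and e: "e \<longlonglongrightarrow> 0"
  shows "(\<lambda>j. f (x j)) \<longlonglongrightarrow> NN f"
proof (rule tendsto_sandwich[where f = "\<lambda>j. NN f - e j" and h = "\<lambda>j. NN f"])
  show "\<forall>\<^sub>F n in sequentially. NN f - e n \<le> f (x n)" using lo by (intro always_eventually) (auto intro: less_imp_le)
  show "\<forall>\<^sub>F n in sequentially. f (x n) \<le> NN f"
  proof (intro always_eventually allI)
    fix n have "\<bar>f (x n)\<bar> \<le> NN f" using NN_upper[OF f] xc xr by blast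
    thus "f (x n) \<le> NN f" by linarith
  qed
  show "(\<lambda>j. NN f - e j) \<longlonglongrightarrow> NN f" using tendsto_diff[OF tendsto_const e] by simp
qed simp

lemma exists_phi: assumes f: "f \<in> DD" and pos: "0 < NN f"
  shows "\<exists>z. (\<forall>k. \<bar>z k\<bar> \<le> 1) \<and> rn z \<le> 1 \<and> Fh f z = NN f"
proof -
  have ex1: "\<forall>j. \<exists>x. x \<in> c0 \<and> rn x \<le> 1 \<and> NN f - 1 / (real j + 1) < f x"
  proof
    fix j :: nat
    have "0 < 1 / (real j + 1)" by simp
    from NN_approx[OF f this] show "\<exists>x. x \<in> c0 \<and> rn x \<le> 1 \<and> NN f - 1 / (real j + 1) < f x" by blast
  qed
  obtain x where x: "\<forall>j. x j \<in> c0 \<and> rn (x j) \<le> 1 \<and> NN f - 1 / (real j + 1) < f (x j)"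
    using choice[OF ex1] by blast
  have "(\<lambda>j. f (x j)) \<longlonglongrightarrow> NN f"
    by (rule seq_lim[OF f, where e = "\<lambda>j. 1 / (real j + 1)"]) (use x lim1 in auto)
  thus ?thesis using cluster[OF f] x by blast
qed

lemma right_deriv:
  assumes f: "f \<in> DD" and pos: "0 < NN f"
    and zb: "\<forall>k. \<bar>z k\<bar> \<le> 1" and zr: "rn z \<le> 1" and zf: "Fh f z = NN f"
    and g: "g \<in> DD"
  shows "((\<lambda>t. (NN (\<lambda>x. f x + t * g x) - NN f) / t) \<longlongrightarrow> Fh g z) (at_right 0)"
proof -
  let ?L = "Fh g z"
  let ?h = "\<lambda>t. (\<lambda>x. f x + t * g x)"
  let ?phi = "\<lambda>t. (NN (?h t) - NN f) / t"
  have hD: "?h t \<in> DD" for t by (rule D_comb[OF f g])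
  have low: "?L \<le> ?phi t" if t: "t > 0" for t
  proof -
    have "\<bar>Fh (?h t) z\<bar> \<le> NN (?h t) * rn z" by (rule Fh_bound[OF hD zb])
    also have "\<dots> \<le> NN (?h t) * 1" by (rule mult_left_mono[OF zr NN_nonneg[OF hD]])
    finally have "NN f + t * ?L \<le> NN (?h t)" using Fh_lin[OF f g zb, of t] zf by simp
    hence "t * ?L \<le> NN (?h t) - NN f" by simp
    thus ?thesis using t by (simp add: field_simps)
  qed
  have up: "\<exists>b>0. \<forall>t>0. t < b \<longrightarrow> ?phi t < ?L + eps" if eps: "eps > 0" for eps
  proof (rule ccontr)
    assume "\<not> ?thesis"
    hence H: "\<forall>b>0. \<exists>t>0. t < b \<and> \<not> ?phi t < ?L + eps" by blast
    have ex2: "\<forall>j. \<exists>t. 0 < t \<and> t < 1 / (real j + 1) \<and> ?L + eps \<le> ?phi t"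
    proof
      fix j :: nat
      have "0 < 1 / (real j + 1)" by simp
      with H obtain t where "t > 0" "t < 1 / (real j + 1)" "\<not> ?phi t < ?L + eps" by blast
      thus "\<exists>t. 0 < t \<and> t < 1 / (real j + 1) \<and> ?L + eps \<le> ?phi t" by (intro exI[of _ t]) simp
    qed
    obtain t where t: "\<forall>j. 0 < t j \<and> t j < 1 / (real j + 1) \<and> ?L + eps \<le> ?phi (t j)"
      using choice[OF ex2] by blast
    have ex3: "\<forall>j. \<exists>x. x \<in> c0 \<and> rn x \<le> 1 \<and> NN (?h (t j)) - (t j)^2 < ?h (t j) x"
    proof
      fix j
      have "0 < (t j)^2" using t[rule_format, of j] by simp
      from NN_approx[OF hD this] show "\<exists>x. x \<in> c0 \<and> rn x \<le> 1 \<and> NN (?h (t j)) - (t j)^2 < ?h (t j) x" by blast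
    qed
    obtain x where x: "\<forall>j. x j \<in> c0 \<and> rn (x j) \<le> 1 \<and> NN (?h (t j)) - (t j)^2 < ?h (t j) (x j)"
      using choice[OF ex3] by blast
    have t0: "t \<longlonglongrightarrow> 0"
    proof (rule tendsto_sandwich[where f = "\<lambda>j. 0" and h = "\<lambda>j. 1 / (real j + 1)"])
      show "\<forall>\<^sub>F n in sequentially. 0 \<le> t n" using t by (intro always_eventually) (auto intro: less_imp_le)
      show "\<forall>\<^sub>F n in sequentially. t n \<le> 1 / (real n + 1)" using t by (intro always_eventually) (auto intro: less_imp_le)
      show "(\<lambda>j. 1 / (real j + 1)) \<longlonglongrightarrow> 0"
        by (rule lim1)
    qed simp
    have fx: "f (x j) \<le> NN f" for j
    proof -
      have "\<bar>f (x j)\<bar> \<le> NN f" using NN_upper[OF f] x by blast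
      thus ?thesis by linarith
    qed
    have gx: "g (x j) \<le> NN g" for j
    proof -
      have "\<bar>g (x j)\<bar> \<le> NN g" using NN_upper[OF g] x by blast
      thus ?thesis by linarith
    qed
    have key: "NN f + t j * (?L + eps) - (t j)^2 < f (x j) + t j * g (x j)" for j
    proof -
      have "?L + eps \<le> ?phi (t j)" using t by blast
      hence "t j * (?L + eps) \<le> NN (?h (t j)) - NN f" using t by (simp add: field_simps)
      moreover have "NN (?h (t j)) - (t j)^2 < f (x j) + t j * g (x j)" using x by blast
      ultimately show ?thesis by linarith
    qed
    define e where "e j = t j * (NN g - ?L - eps) + (t j)^2" for j
    have e0: "e \<longlonglongrightarrow> 0" unfolding e_def using t0 by (auto intro!: tendsto_eq_intros)
    have lo: "\<forall>j. NN f - e j < f (x j)"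
    proof
      fix j
      have "t j * g (x j) \<le> t j * NN g" using gx t by (intro mult_left_mono) (auto intro: less_imp_le)
      thus "NN f - e j < f (x j)" using key[of j] unfolding e_def by (simp add: algebra_simps)
    qed
    have flim: "(\<lambda>j. f (x j)) \<longlonglongrightarrow> NN f" by (rule seq_lim[OF f _ _ lo e0]) (use x in auto)
    have glow: "?L + eps - t j < g (x j)" for j
    proof -
      have "t j * (?L + eps) - (t j)^2 < t j * g (x j)" using key[of j] fx[of j] by simp
      hence "t j * (?L + eps - t j) < t j * g (x j)" by (simp add: power2_eq_square algebra_simps)
      thus ?thesis using t[rule_format, of j] by (simp add: mult_less_cancel_left)
    qed
    obtain r w where r: "strict_mono r" and wb: "\<forall>k. \<bar>w k\<bar> \<le> 1" and wr: "rn w \<le> 1"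
      and wf: "Fh f w = NN f" and wl: "\<forall>g\<in>DD. (\<lambda>j. g (x (r j))) \<longlonglongrightarrow> Fh g w"
      using cluster[OF f _ _ flim] x by blast
    have "w = z" by (rule unique[OF f pos wb wr wf zb zr zf])
    hence gl: "(\<lambda>j. g (x (r j))) \<longlonglongrightarrow> ?L" using wl g by blast
    have "(\<lambda>j. ?L + eps - t (r j)) \<longlonglongrightarrow> ?L + eps - 0"
      using LIMSEQ_subseq_LIMSEQ[OF t0 r] by (auto intro!: tendsto_eq_intros simp: o_def)
    hence "?L + eps - 0 \<le> ?L"
      by (rule LIMSEQ_le[OF _ gl]) (use glow in \<open>auto intro: less_imp_le\<close>)
    thus False using eps by simp
  qed
  show ?thesis
  proof (rule order_tendstoI)
    fix c assume "c < ?L"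
    thus "\<forall>\<^sub>F t in at_right 0. c < ?phi t"
      unfolding eventually_at_right_field using low by (intro exI[of _ 1]) force
  next
    fix c assume c: "?L < c"
    then obtain b where "b > 0" "\<forall>t>0. t < b \<longrightarrow> ?phi t < ?L + (c - ?L)" using up[of "c - ?L"] by auto
    thus "\<forall>\<^sub>F t in at_right 0. ?phi t < c" unfolding eventually_at_right_field by auto
  qed
qed

end

theorem corollary2p5:
  fixes u :: "nat \<Rightarrow> nat \<Rightarrow> real" and a :: "nat \<Rightarrow> nat"
  assumes "read_admissible u a"
  shows "\<forall>f\<in>read_dual u a. f \<noteq> (\<lambda>_. 0) \<longrightarrow> gateaux_diff (read_dual u a) (dual_norm u a) f"
proof (intro ballI impI)
  interpret RS u a by unfold_locales (rule assms)
  fix f assume f: "f \<in> DD" and nz: "f \<noteq> (\<lambda>_. 0)"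
  have pos: "0 < NN f" by (rule NN_pos[OF f nz])
  obtain z where zb: "\<forall>k. \<bar>z k\<bar> \<le> 1" and zr: "rn z \<le> 1" and zf: "Fh f z = NN f"
    using exists_phi[OF f pos] by blast
  show "gateaux_diff DD NN f" unfolding gateaux_diff_def
  proof (intro exI[of _ "\<lambda>g. Fh g z"] conjI ballI allI)
    fix g assume g: "g \<in> DD"
    let ?phi = "\<lambda>t. (NN (\<lambda>x. f x + t * g x) - NN f) / t"
    have R: "(?phi \<longlongrightarrow> Fh g z) (at_right 0)" by (rule right_deriv[OF f pos zb zr zf g])
    have g': "(\<lambda>x. (-1) * g x) \<in> DD" by (rule D_scale[OF g])
    have R': "((\<lambda>t. (NN (\<lambda>x. f x + t * ((-1) * g x)) - NN f) / t) \<longlongrightarrow> Fh (\<lambda>x. (-1) * g x) z) (at_right 0)"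
      by (rule right_deriv[OF f pos zb zr zf g'])
    have eqf: "?phi (- t) = - ((NN (\<lambda>x. f x + t * ((-1) * g x)) - NN f) / t)" for t
    proof -
      have "(\<lambda>x. f x + (- t) * g x) = (\<lambda>x. f x + t * ((-1) * g x))" by (rule ext) simp
      thus ?thesis by (simp add: divide_simps)
    qed
    have "Fh (\<lambda>x. (-1) * g x) z = - Fh g z" using Fh_scale[OF g zb, of "-1"] by simp
    hence "((\<lambda>t. ?phi (- t)) \<longlongrightarrow> Fh g z) (at_right 0)"
      using tendsto_minus[OF R'] eqf by simp
    hence Lf: "(?phi \<longlongrightarrow> Fh g z) (at_left 0)"
      by (simp add: filterlim_at_left_to_right[where a = 0])
    show "(?phi \<longlongrightarrow> Fh g z) (at 0)" using filterlim_at_split R Lf by blast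
  next
    fix g h assume g: "g \<in> DD" and h: "h \<in> DD"
    show "Fh (\<lambda>x. g x + h x) z = Fh g z + Fh h z" using Fh_lin[OF g h zb, of 1] by simp
  next
    fix c g assume g: "g \<in> DD"
    show "Fh (\<lambda>x. c * g x) z = c * Fh g z" by (rule Fh_scale[OF g zb])
  next
    show "\<exists>C. \<forall>g\<in>DD. \<bar>Fh g z\<bar> \<le> C * NN g"
    proof (intro exI[of _ 1] ballI)
      fix g assume g: "g \<in> DD"
      have "\<bar>Fh g z\<bar> \<le> NN g * rn z" by (rule Fh_bound[OF g zb])
      also have "\<dots> \<le> NN g * 1" by (rule mult_left_mono[OF zr NN_nonneg[OF g]])
      finally show "\<bar>Fh g z\<bar> \<le> 1 * NN g" by simp
    qed
  qed
qed

end
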